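(* Let $q$ be a prime power, $r\mid(q-1)$ with $r\ge 3$, and $q/2\le\ell\le q-1$. The quantum Tamo–Barg code $\mathrm{CSS}(C,C)$ with parameters $q,r,\ell$ is a quantum locally recoverable code with locality $r$.
   Context: $[n]=\{0,\dots,n-1\}$, $\mathbb{F}_q^*=\mathbb{F}_q\setminus\{0\}$. For $S\subseteq\mathbb{Z}_{\ge0}$, $\mathbb{F}_q[X]^S=\{\sum_{i\in S}a_iX^i\}$, $\mathrm{ev}(f)=(f(x))_{x\in\mathbb{F}_q^*}$. Let $S=\{i\in[\ell]:i\not\equiv r-1\pmod r\}\cup\{i\in[q-1]:i\equiv1\pmod r\}$, $C=\mathrm{ev}(\mathbb{F}_q[X]^S)$; for $\ell\ge q/2$, $C^\perp\subseteq C$ and the quantum Tamo–Barg code is $\mathrm{CSS}(C,C)=\mathrm{span}\{\sum_{y\in C^\perp}|x+y\rangle:x\in C\}\subseteq(\mathbb{C}^q)^{\otimes(q-1)}$, with qudits indexed by $\mathbb{F}_q^*$. A quantum code $\mathcal{C}$ on qudit set $Q$ is locally recoverable with locality $r$ if for each $i\in Q$ there is $I_i\subseteq Q$ with $i\in I_i$, $|I_i|\le r$, and a quantum channel $\mathrm{Rec}_i$ from the qudits $I_i\setminus\{i\}$ to the qudits $I_i$ such that $(\mathrm{Rec}_i\otimes\mathrm{id})(\psi_{Q\setminus\{i\}})=\psi$ for every code state $\psi$ (here $\psi_B$ is the reduced density matrix on $B$). *)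

theory Defs
  imports Complex_Main "HOL-Computational_Algebra.Polynomial"
begin

definition qudits :: "'a::zero set" where
  "qudits = {x. x \<noteq> 0}"

(* Computational basis labels of a set B of qudits: assignments B -> F_q,
   represented as functions that vanish outside B. *)
definition configs :: "'a set \<Rightarrow> ('a \<Rightarrow> 'b::zero) set" where
  "configs B = {f. \<forall>x. x \<notin> B \<longrightarrow> f x = 0}"

definition restr :: "('a \<Rightarrow> 'b::zero) \<Rightarrow> 'a set \<Rightarrow> 'a \<Rightarrow> 'b" where
  "restr f B = (\<lambda>x. if x \<in> B then f x else 0)"

(* Operators (matrices) on qudit subsystems, indexed by basis labels. *)
type_synonym 'a qop = "('a \<Rightarrow> 'a) \<Rightarrow> ('a \<Rightarrow> 'a) \<Rightarrow> complex"

(* Reduced density matrix: partial trace of an operator on A down to B \<subseteq> A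
   (tracing out A - B). *)
definition ptrace :: "'a set \<Rightarrow> 'a set \<Rightarrow> ('a::zero) qop \<Rightarrow> 'a qop" where
  "ptrace A B \<rho> = (\<lambda>u v. \<Sum>w\<in>configs (A - B).
      \<rho> (\<lambda>x. if x \<in> B then u x else w x) (\<lambda>x. if x \<in> B then v x else w x))"

definition TB_S :: "nat \<Rightarrow> nat \<Rightarrow> nat \<Rightarrow> nat set" where
  "TB_S q r l = {i. i < l \<and> i mod r \<noteq> r - 1} \<union> {i. i < q - 1 \<and> i mod r = 1}"

definition ev :: "'a::field poly \<Rightarrow> 'a \<Rightarrow> 'a" where
  "ev p = (\<lambda>x. if x \<noteq> 0 then poly p x else 0)"

definition TB_code :: "nat \<Rightarrow> nat \<Rightarrow> ('a::{finite,field} \<Rightarrow> 'a) set" where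
  "TB_code r l = ev ` {p. \<forall>i. coeff p i \<noteq> 0 \<longrightarrow> i \<in> TB_S (card (UNIV :: 'a set)) r l}"

definition dual_code :: "('a::{finite,field} \<Rightarrow> 'a) set \<Rightarrow> ('a \<Rightarrow> 'a) set" where
  "dual_code C = {y \<in> configs qudits. \<forall>x\<in>C. (\<Sum>t\<in>qudits. x t * y t) = 0}"

(* CSS(C1,C2) = span { sum_{y in C2^perp} |x+y> : x in C1 } (complex span;
   C1 is finite so the span is the set of these linear combinations). *)
definition CSS_space :: "('a::{finite,field} \<Rightarrow> 'a) set \<Rightarrow> ('a \<Rightarrow> 'a) set
    \<Rightarrow> (('a \<Rightarrow> 'a) \<Rightarrow> complex) set" where
  "CSS_space C1 C2 = {\<phi>. \<exists>c :: ('a \<Rightarrow> 'a) \<Rightarrow> complex.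
      \<phi> = (\<lambda>w. \<Sum>x\<in>C1. c x *
              (if \<exists>y\<in>dual_code C2. w = (\<lambda>t. x t + y t) then 1 else 0))}"

(* code states: density matrices on Q supported on the code space V, i.e.
   convex combinations of pure normalized code states *)
definition code_state :: "'a set \<Rightarrow> (('a \<Rightarrow> 'a) \<Rightarrow> complex) set \<Rightarrow> ('a::zero) qop \<Rightarrow> bool" where
  "code_state Q V \<rho> \<longleftrightarrow> (\<exists>(n::nat) (p::nat \<Rightarrow> real) \<phi>.
      (\<forall>k<n. p k \<ge> 0 \<and> \<phi> k \<in> V \<and> (\<Sum>w\<in>configs Q. (cmod (\<phi> k w))\<^sup>2) = 1) \<and>
      (\<Sum>k<n. p k) = 1 \<and>
      (\<forall>u\<in>configs Q. \<forall>v\<in>configs Q.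
         \<rho> u v = (\<Sum>k<n. complex_of_real (p k) * \<phi> k u * cnj (\<phi> k v))))"

(* quantum channel from qudits A to qudits B, in Kraus form:
   Kraus operators K j (j < m), K j v u with v \<in> configs B, u \<in> configs A,
   satisfying sum_j K_j^dagger K_j = Id *)
definition kraus_channel :: "'a set \<Rightarrow> 'a set \<Rightarrow> (nat \<Rightarrow> ('a::zero) qop) \<Rightarrow> nat \<Rightarrow> bool" where
  "kraus_channel A B K m \<longleftrightarrow>
     (\<forall>u\<in>configs A. \<forall>u'\<in>configs A.
        (\<Sum>j<m. \<Sum>v\<in>configs B. cnj (K j v u) * K j v u') = (if u = u' then 1 else 0))"

(* (Rec \<otimes> id)(\<rho>) where Rec: A -> B is the Kraus channel K, identity acts on Q - B;
   \<rho> lives on A \<union> (Q - B), the result on Q (assuming A \<subseteq> B \<subseteq> Q). *)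
definition apply_ext :: "'a set \<Rightarrow> 'a set \<Rightarrow> 'a set \<Rightarrow> (nat \<Rightarrow> ('a::zero) qop) \<Rightarrow> nat
    \<Rightarrow> 'a qop \<Rightarrow> 'a qop" where
  "apply_ext Q A B K m \<rho> = (\<lambda>v v'. \<Sum>j<m. \<Sum>u\<in>configs (A \<union> (Q - B)). \<Sum>u'\<in>configs (A \<union> (Q - B)).
      (if restr v (Q - B) = restr u (Q - B) \<and> restr v' (Q - B) = restr u' (Q - B)
       then K j (restr v B) (restr u A) * \<rho> u u' * cnj (K j (restr v' B) (restr u' A))
       else 0))"

definition locally_recoverable :: "('a::zero) set \<Rightarrow> (('a \<Rightarrow> 'a) \<Rightarrow> complex) set \<Rightarrow> nat \<Rightarrow> bool" where
  "locally_recoverable Q V r \<longleftrightarrow>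
    (\<forall>i\<in>Q. \<exists>I. i \<in> I \<and> I \<subseteq> Q \<and> card I \<le> r \<and>
       (\<exists>K m. kraus_channel (I - {i}) I K m \<and>
          (\<forall>\<psi>. code_state Q V \<psi> \<longrightarrow>
             (\<forall>v\<in>configs Q. \<forall>v'\<in>configs Q.
                apply_ext Q (I - {i}) I K m (ptrace Q (Q - {i}) \<psi>) v v' = \<psi> v v'))))"

end

theory Submission
  imports Defs
begin


lemma card_pow_eq:
  fixes c :: "'a::field"
  assumes "d \<ge> 1"
  shows "card {x. x^d = c} \<le> d"
proof -
  let ?p = "monom 1 d + [:-c:]"
  have deg: "degree ?p = d" using assms
    by (subst degree_add_eq_left) (auto simp: degree_monom_eq)
  have ne: "?p \<noteq> 0" using deg assms by auto
  have "{x. x^d = c} = {x. poly ?p x = 0}" by (auto simp: poly_monom)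
  then show ?thesis using card_poly_roots_bound[OF ne] deg by simp
qed

lemma char_card: "(of_nat (card (UNIV::'a::{finite,field} set)) :: 'a) = 0"
proof -
  have b: "bij_betw (\<lambda>x::'a. x + 1) UNIV UNIV"
    by (rule bij_betw_byWitness[where f'="\<lambda>x. x - 1"]) auto
  have "(\<Sum>x\<in>UNIV. x) = (\<Sum>x\<in>UNIV. (x::'a) + 1)"
    using sum.reindex_bij_betw[OF b, of "\<lambda>x. x"] by simp
  also have "\<dots> = (\<Sum>x\<in>UNIV. x) + of_nat (card (UNIV::'a set))"
    by (simp add: sum.distrib)
  finally show ?thesis by simp
qed

lemma fermat_ff:
  fixes x :: "'a::{finite,field}"
  assumes "x \<noteq> 0"
  shows "x ^ (card (UNIV::'a set) - 1) = 1"
proof -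
  let ?Q = "UNIV - {0::'a}"
  have b: "bij_betw (\<lambda>y. x * y) ?Q ?Q"
    by (rule bij_betw_byWitness[where f'="\<lambda>y. y / x"]) (use assms in auto)
  have "prod (\<lambda>y. y) ?Q = prod (\<lambda>y. x * y) ?Q"
    using prod.reindex_bij_betw[OF b, of "\<lambda>y. y"] by simp
  also have "\<dots> = x ^ card ?Q * prod (\<lambda>y. y) ?Q"
    by (simp add: prod.distrib)
  finally have "x ^ card ?Q = 1"
    by (simp add: prod_zero_iff)
  moreover have "card ?Q = card (UNIV::'a set) - 1"
    by (simp add: card_Diff_singleton)
  ultimately show ?thesis by simp
qed

lemma card_Q: "card (qudits :: 'a::{finite,field} set) = card (UNIV::'a set) - 1"
proof -
  have "(qudits :: 'a set) = UNIV - {0}" by (auto simp: qudits_def)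
  then show ?thesis by (metis card_Diff_singleton finite UNIV_I)
qed

lemma card_ge2: "card (UNIV::'a::{finite,field} set) \<ge> 2"
proof -
  have "card {0::'a, 1} \<le> card (UNIV::'a set)" by (rule card_mono) auto
  thus ?thesis by simp
qed

lemma power_sum_zero:
  fixes m :: nat
  assumes "\<not> (card (UNIV::'a::{finite,field} set) - 1) dvd m"
  shows "(\<Sum>t\<in>(qudits::'a set). t ^ m) = 0"
proof -
  let ?q = "card (UNIV::'a set)"
  define d where "d = m mod (?q - 1)"
  have d0: "d \<noteq> 0" using assms by (simp add: d_def mod_eq_0_iff_dvd)
  have "?q - 1 \<noteq> 0" using card_ge2[where 'a='a] by auto
  hence dlt: "d < ?q - 1" unfolding d_def by simp
  have "\<exists>x0::'a. x0 \<noteq> 0 \<and> x0 ^ d \<noteq> 1"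
  proof (rule ccontr)
    assume "\<not> ?thesis"
    hence "(qudits :: 'a set) \<subseteq> {x. x^d = 1}" by (auto simp: qudits_def)
    hence "card (qudits :: 'a set) \<le> card {x::'a. x^d = 1}" by (intro card_mono) auto
    also have "\<dots> \<le> d" using card_pow_eq[of d "1::'a"] d0 by simp
    finally show False using dlt card_Q[where 'a='a] card_ge2[where 'a='a] by simp
  qed
  then obtain x0 :: 'a where x0: "x0 \<noteq> 0" "x0 ^ d \<noteq> 1" by blast
  have "x0 ^ m = x0 ^ d"
  proof -
    have "m = (?q - 1) * (m div (?q - 1)) + d" by (simp add: d_def)
    hence "x0 ^ m = (x0 ^ (?q - 1)) ^ (m div (?q - 1)) * x0 ^ d"
      by (metis power_add power_mult)
    thus ?thesis using fermat_ff[OF x0(1)] by simp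
  qed
  hence xm: "x0 ^ m \<noteq> 1" using x0 by simp
  have b: "bij_betw (\<lambda>y. x0 * y) (qudits::'a set) qudits"
    by (rule bij_betw_byWitness[where f'="\<lambda>y. y / x0"]) (use x0 in \<open>auto simp: qudits_def\<close>)
  have "(\<Sum>t\<in>(qudits::'a set). t ^ m) = (\<Sum>t\<in>qudits. (x0 * t) ^ m)"
    using sum.reindex_bij_betw[OF b, of "\<lambda>y. y ^ m"] by simp
  also have "\<dots> = x0 ^ m * (\<Sum>t\<in>qudits. t ^ m)"
    by (simp add: power_mult_distrib sum_distrib_left)
  finally have "(1 - x0 ^ m) * (\<Sum>t\<in>(qudits::'a set). t ^ m) = 0"
    by (simp add: algebra_simps)
  thus ?thesis using xm by simp
qed

lemma poly_prod_sum:
  fixes p H :: "'a::field poly"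
  assumes "finite Q"
  shows "(\<Sum>t\<in>Q. poly p t * poly H t) =
    (\<Sum>a\<le>degree p. \<Sum>b\<le>degree H. coeff p a * coeff H b * (\<Sum>t\<in>Q. t ^ (a + b)))"
proof -
  have "(\<Sum>t\<in>Q. poly p t * poly H t) =
     (\<Sum>t\<in>Q. \<Sum>a\<le>degree p. \<Sum>b\<le>degree H. coeff p a * coeff H b * t ^ (a + b))"
    unfolding poly_altdef sum_product by (simp add: power_add mult_ac)
  also have "\<dots> = (\<Sum>a\<le>degree p. \<Sum>t\<in>Q. \<Sum>b\<le>degree H. coeff p a * coeff H b * t ^ (a + b))"
    by (rule sum.swap)
  also have "\<dots> = (\<Sum>a\<le>degree p. \<Sum>b\<le>degree H. \<Sum>t\<in>Q. coeff p a * coeff H b * t ^ (a + b))"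
    by (rule sum.cong[OF refl], rule sum.swap)
  also have "\<dots> = (\<Sum>a\<le>degree p. \<Sum>b\<le>degree H. coeff p a * coeff H b * (\<Sum>t\<in>Q. t ^ (a + b)))"
    by (simp add: sum_distrib_left)
  finally show ?thesis .
qed

lemma geom_root:
  fixes z :: "'a::field"
  assumes "z ^ n = 1"
  shows "(\<Sum>k<n. z ^ k) = (if z = 1 then of_nat n else 0)"
  using assms by (simp add: geometric_sum)

lemma mod_arith:
  fixes a k r :: nat
  assumes "r \<ge> 3" "r dvd a + r * k + 1"
  shows "a mod r = r - 1"
proof -
  have "a + r * k + 1 = (a + 1) + r * k" by simp
  then have "r dvd a + 1" using assms(2) by (metis dvd_add_left_iff dvd_triv_left)
  then have "(a + 1) mod r = 0" by simp
  then show ?thesis using assms(1)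
    by (simp add: mod_Suc split: if_splits)
qed

lemma TB_check:
  fixes i :: "'a::{finite,field}" and r l :: nat
  assumes rd: "r dvd (card (UNIV :: 'a set) - 1)" and r3: "r \<ge> 3" and i0: "i \<noteq> 0"
  shows "\<exists>h. h \<in> TB_code r l \<and> h \<in> dual_code (TB_code r l :: ('a \<Rightarrow> 'a) set) \<and> h i \<noteq> 0 \<and>
           (\<forall>t. h t \<noteq> 0 \<longrightarrow> t \<noteq> 0 \<and> t ^ r = i ^ r)"
proof -
  define q where "q = card (UNIV :: 'a set)"
  define n where "n = (q - 1) div r"
  define \<beta> where "\<beta> = i ^ r"
  define H :: "'a poly" where "H = smult (inverse (of_nat n)) (\<Sum>k<n. monom (inverse \<beta> ^ k) (r * k + 1))"
  have q2: "q \<ge> 2" unfolding q_def by (rule card_ge2)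
  have rn: "r * n = q - 1" using rd unfolding n_def q_def by simp
  have \<beta>0: "\<beta> \<noteq> 0" using i0 by (simp add: \<beta>_def)
  have "(of_nat r * of_nat n :: 'a) = of_nat (q - 1)" using rn by (metis of_nat_mult)
  also have "\<dots> = of_nat q - 1" using q2 by (simp add: of_nat_diff)
  also have "\<dots> = -1" using char_card[where 'a='a] by (simp add: q_def)
  finally have nz: "(of_nat n :: 'a) \<noteq> 0" by auto
  have polyH: "poly H t = (if t ^ r = \<beta> then t else 0)" if t0: "t \<noteq> 0" for t
  proof -
    define z where "z = t ^ r * inverse \<beta>"
    have "poly H t = inverse (of_nat n) * (\<Sum>k<n. inverse \<beta> ^ k * t ^ (r * k + 1))"
      by (simp add: H_def poly_sum poly_monom)
    also have "\<dots> = inverse (of_nat n) * t * (\<Sum>k<n. z ^ k)"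
      by (simp add: z_def sum_distrib_left power_mult_distrib mult_ac flip: power_mult)
    also have "(\<Sum>k<n. z ^ k) = (if z = 1 then of_nat n else 0)"
    proof (rule geom_root)
      have "z ^ n = t ^ (r * n) * inverse (i ^ (r * n))"
        by (simp add: z_def \<beta>_def power_mult_distrib power_mult power_inverse)
      also have "\<dots> = 1" using rn fermat_ff[OF t0] fermat_ff[OF i0] by (simp add: q_def)
      finally show "z ^ n = 1" .
    qed
    also have "(z = 1) = (t ^ r = \<beta>)" using \<beta>0 by (auto simp: z_def field_simps)
    finally show ?thesis using nz by auto
  qed
  define h where "h = ev H"
  have hH: "h t = (if t \<noteq> 0 \<and> t ^ r = \<beta> then t else 0)" for t
    using polyH by (simp add: h_def ev_def)
  have coeffH: "\<exists>k<n. j = r * k + 1" if "coeff H j \<noteq> 0" for j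
  proof (rule ccontr)
    assume "\<not> ?thesis"
    hence "coeff H j = 0" by (auto simp: H_def coeff_sum coeff_monom intro!: sum.neutral)
    thus False using that by simp
  qed
  have HS: "coeff H j \<noteq> 0 \<longrightarrow> j \<in> TB_S q r l" for j
  proof
    assume "coeff H j \<noteq> 0"
    then obtain k where k: "k < n" "j = r * k + 1" using coeffH by blast
    have "r * k + r \<le> r * n" using k(1) by (metis mult_Suc_right Suc_leI mult_le_mono2 add.commute)
    hence "j < q - 1" using k r3 rn by simp
    moreover have "j mod r = 1" using k r3 by (simp add: mod_Suc)
    ultimately show "j \<in> TB_S q r l" by (simp add: TB_S_def)
  qed
  have hC: "h \<in> TB_code r l" unfolding TB_code_def h_def using HS by (auto simp: q_def)
  have hD: "h \<in> dual_code (TB_code r l)"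
    unfolding dual_code_def
  proof (intro CollectI conjI ballI)
    show "h \<in> configs qudits" by (simp add: configs_def qudits_def hH)
    fix x assume "x \<in> (TB_code r l :: ('a \<Rightarrow> 'a) set)"
    then obtain p where p: "x = ev p" "\<forall>i. coeff p i \<noteq> 0 \<longrightarrow> i \<in> TB_S q r l"
      unfolding TB_code_def q_def by blast
    have "(\<Sum>t\<in>qudits. x t * h t) = (\<Sum>t\<in>qudits. poly p t * poly H t)"
      by (rule sum.cong) (auto simp: p ev_def h_def qudits_def)
    also have "\<dots> = (\<Sum>a\<le>degree p. \<Sum>b\<le>degree H. coeff p a * coeff H b * (\<Sum>t\<in>qudits. t ^ (a + b)))"
      by (rule poly_prod_sum) simp
    also have "\<dots> = 0"
    proof (intro sum.neutral ballI)
      fix a b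
      show "coeff p a * coeff H b * (\<Sum>t\<in>qudits. t ^ (a + b)) = 0"
      proof (cases "coeff p a = 0 \<or> coeff H b = 0")
        case True thus ?thesis by auto
      next
        case False
        then have aS: "a \<in> TB_S q r l" using p(2) by auto
        from False obtain k where k: "k < n" "b = r * k + 1" using coeffH by blast
        have "\<not> (q - 1) dvd (a + b)"
        proof
          assume "(q - 1) dvd (a + b)"
          hence "r dvd a + r * k + 1" using rd k unfolding q_def by (metis add.assoc dvd_trans)
          hence "a mod r = r - 1" using mod_arith r3 by blast
          thus False using aS r3 by (auto simp: TB_S_def)
        qed
        hence "(\<Sum>t\<in>(qudits::'a set). t ^ (a + b)) = 0" using power_sum_zero unfolding q_def by blast
        thus ?thesis by simp
      qed
    qed
    finally show "(\<Sum>t\<in>qudits. x t * h t) = 0" .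
  qed
  have "h i \<noteq> 0" using i0 by (simp add: hH \<beta>_def)
  moreover have "\<forall>t. h t \<noteq> 0 \<longrightarrow> t \<noteq> 0 \<and> t ^ r = i ^ r" by (auto simp: hH \<beta>_def split: if_splits)
  ultimately show ?thesis using hC hD by blast
qed



definition Lf :: "('a::{finite,field} \<Rightarrow> 'a) \<Rightarrow> ('a \<Rightarrow> 'a) \<Rightarrow> 'a" where
  "Lf h f = (\<Sum>t\<in>qudits. h t * f t)"

definition Kr :: "('a::{finite,field} \<Rightarrow> 'a) \<Rightarrow> 'a \<Rightarrow> (nat \<Rightarrow> 'a) \<Rightarrow> nat \<Rightarrow> ('a \<Rightarrow> 'a) \<Rightarrow> ('a \<Rightarrow> 'a) \<Rightarrow> complex" where
  "Kr h i sj j v u = (if Lf h (u(i := sj j)) = 0 \<and> (\<exists>c. v = (\<lambda>t. (u(i := sj j)) t + c * h t))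
      then complex_of_real (1 / sqrt (real (card (UNIV :: 'a set)))) else 0)"

lemma finite_qudits[simp]: "finite (qudits :: 'a::{finite,zero} set)" by simp

lemma Lf_upd:
  assumes "i \<in> qudits"
  shows "Lf h (f(i := s)) = Lf h f + h i * (s - f i)"
proof -
  have "Lf h (f(i := s)) = (\<Sum>t\<in>qudits. h t * f t + (if t = i then h i * (s - f i) else 0))"
    unfolding Lf_def by (rule sum.cong) (auto simp: algebra_simps)
  also have "\<dots> = Lf h f + h i * (s - f i)"
    using assms by (simp add: sum.distrib Lf_def)
  finally show ?thesis .
qed

lemma Lf_cong:
  assumes "\<forall>t. t \<notin> I \<longrightarrow> h t = 0" "\<forall>t\<in>I. f t = g t"
  shows "Lf h f = Lf h g"
  unfolding Lf_def by (rule sum.cong) (use assms in auto)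

lemma finite_configs[simp]: "finite (configs (B :: 'a::finite set) :: ('a \<Rightarrow> 'b::{zero,finite}) set)"
  by simp

lemma kraus_ok:
  fixes h :: "'a::{finite,field} \<Rightarrow> 'a"
  assumes iQ: "i \<in> qudits" and iI: "i \<in> I" and hI: "\<forall>t. t \<notin> I \<longrightarrow> h t = 0" and hi: "h i \<noteq> 0"
    and sj: "bij_betw sj {..<card (UNIV::'a set)} UNIV"
  shows "kraus_channel (I - {i}) I (Kr h i sj) (card (UNIV::'a set))"
  unfolding kraus_channel_def
proof (intro ballI)
  fix u u' :: "'a \<Rightarrow> 'a"
  assume u: "u \<in> configs (I - {i})" and u': "u' \<in> configs (I - {i})"
  let ?q = "card (UNIV::'a set)"
  let ?a = "complex_of_real (1 / sqrt (real ?q))"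
  have q0: "real ?q > 0" using card_ge2[where 'a='a] by simp
  have aa: "cnj ?a * ?a = 1 / of_nat ?q"
    using q0 by (simp flip: of_real_mult)
  have sq: "complex_of_real (sqrt (real ?q)) * complex_of_real (sqrt (real ?q)) = of_nat ?q"
    by (simp flip: of_real_mult)
  define f where "f s c = (\<lambda>t. (u(i:=s)) t + c * h t)" for s c
  have ui: "u i = 0" and u'i: "u' i = 0" using u u' by (auto simp: configs_def)
  have inner: "(\<Sum>v\<in>configs I. cnj (Kr h i sj j v u) * Kr h i sj j v u') =
      (if u = u' \<and> Lf h (u(i := sj j)) = 0 then 1 else 0)" for j
  proof (cases "u = u'")
    case True
    let ?s = "sj j"
    have inj: "inj (f ?s)"
    proof (rule injI)
      fix c c' assume "f ?s c = f ?s c'"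
      hence "f ?s c i = f ?s c' i" by simp
      thus "c = c'" using hi by (simp add: f_def)
    qed
    have rng: "range (f ?s) \<subseteq> configs I"
      using u hI iI by (auto simp: f_def configs_def)
    define X where "X = (if Lf h (u(i := ?s)) = 0 then 1 / of_nat ?q else (0::complex))"
    have "(\<Sum>v\<in>configs I. cnj (Kr h i sj j v u) * Kr h i sj j v u') =
          (\<Sum>v\<in>configs I. if v \<in> range (f ?s) then X else 0)"
      by (rule sum.cong) (auto simp: True Kr_def X_def aa f_def sq)
    also have "\<dots> = (\<Sum>v\<in>configs I \<inter> range (f ?s). X)"
      by (rule sum.inter_restrict[symmetric]) simp
    also have "configs I \<inter> range (f ?s) = range (f ?s)" using rng by blast
    also have "(\<Sum>v\<in>range (f ?s). X) = of_nat ?q * X"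
      using card_image[OF inj] by simp
    also have "\<dots> = (if u = u' \<and> Lf h (u(i := sj j)) = 0 then 1 else 0)"
      using True by (simp add: X_def)
    finally show ?thesis .
  next
    case False
    have "cnj (Kr h i sj j v u) * Kr h i sj j v u' = 0" for v
    proof (rule ccontr)
      assume "\<not> ?thesis"
      then obtain c c' where c: "v = (\<lambda>t. (u(i := sj j)) t + c * h t)"
        and c': "v = (\<lambda>t. (u'(i := sj j)) t + c' * h t)"
        by (auto simp: Kr_def split: if_splits)
      have e1: "v i = sj j + c * h i" using c by simp
      have e2: "v i = sj j + c' * h i" using c' by simp
      have "(c - c') * h i = 0" using e1 e2 by (auto simp: algebra_simps)
      hence cc: "c = c'" using hi by simp
      have "u t = u' t" for t
      proof (cases "t = i")
        case True thus ?thesis using ui u'i by simp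
      next
        case False
        have "v t = u t + c * h t" using c False by simp
        moreover have "v t = u' t + c' * h t" using c' False by simp
        ultimately show ?thesis using cc by simp
      qed
      thus False using False by auto
    qed
    hence "(\<Sum>v\<in>configs I. cnj (Kr h i sj j v u) * Kr h i sj j v u') = 0"
      by (intro sum.neutral) blast
    thus ?thesis using False by simp
  qed
  have "(\<Sum>j<?q. \<Sum>v\<in>configs I. cnj (Kr h i sj j v u) * Kr h i sj j v u') =
      (\<Sum>j<?q. (\<lambda>s. if u = u' \<and> Lf h (u(i := s)) = 0 then 1 else 0) (sj j))"
    by (simp add: inner)
  also have "\<dots> = (\<Sum>s\<in>UNIV. if u = u' \<and> Lf h (u(i := s)) = 0 then 1 else (0::complex))"
    by (rule sum.reindex_bij_betw[OF sj])
  also have "\<dots> = (if u = u' then 1 else 0)"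
  proof (cases "u = u'")
    case True
    have "(Lf h (u(i := s)) = 0) = (s = - Lf h u / h i)" for s
      using hi by (auto simp: Lf_upd[OF iQ] ui field_simps eq_neg_iff_add_eq_0 add.commute)
    then show ?thesis using True by simp
  qed simp
  finally show "(\<Sum>j<?q. \<Sum>v\<in>configs I. cnj (Kr h i sj j v u) * Kr h i sj j v u') =
      (if u = u' then 1 else 0)" .
qed

lemma rec_a:
  fixes \<phi> :: "('a::{finite,field} \<Rightarrow> 'a) \<Rightarrow> complex" and h :: "'a \<Rightarrow> 'a"
  assumes iQ: "i \<in> qudits" and iI: "i \<in> I" and IQ: "I \<subseteq> qudits"
    and hI: "\<forall>t. t \<notin> I \<longrightarrow> h t = 0" and hi: "h i \<noteq> 0"
    and P1: "\<forall>w. \<phi> w \<noteq> 0 \<longrightarrow> Lf h w = 0" and P2: "\<forall>w c. \<phi> (\<lambda>t. w t + c * h t) = \<phi> w"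
    and w: "w \<in> configs qudits"
  shows "(\<Sum>u\<in>configs ((I - {i}) \<union> (qudits - I)).
      (if restr w (qudits - I) = restr u (qudits - I)
       then Kr h i sj j (restr w I) (restr u (I - {i})) * \<phi> (u(i := x)) else 0)) =
    (if x = sj j then \<phi> w * complex_of_real (1 / sqrt (real (card (UNIV :: 'a set)))) else 0)"
proof -
  let ?Q = "qudits :: 'a set"
  let ?A = "I - {i}"
  let ?U = "configs ((I - {i}) \<union> (?Q - I)) :: ('a \<Rightarrow> 'a) set"
  let ?a0 = "complex_of_real (1 / sqrt (real (card (UNIV :: 'a set))))"
  define s where "s = sj j"
  define c0 where "c0 = (w i - s) / h i"
  define w0 where "w0 = (\<lambda>t. w t + (- c0) * h t)"
  define u0 where "u0 = w0(i := 0)"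
  have Ueq: "(I - {i}) \<union> (?Q - I) = ?Q - {i}" using iI IQ by auto
  have w0i: "w0 i = s" using hi by (simp add: w0_def c0_def field_simps)
  have wout: "w t = 0" if "t \<notin> ?Q" for t using w that by (auto simp: configs_def)
  have hout: "h t = 0" if "t \<notin> I" for t using hI that by auto
  have u0U: "u0 \<in> ?U" unfolding Ueq configs_def
  proof (intro CollectI allI impI)
    fix t assume "t \<notin> ?Q - {i}"
    then show "u0 t = 0"
      using IQ wout[of t] hout[of t] by (cases "t = i") (auto simp: u0_def w0_def)
  qed
  have key: "(restr w (?Q - I) = restr u (?Q - I) \<and>
        (\<exists>c. restr w I = (\<lambda>t. ((restr u ?A)(i := s)) t + c * h t))) \<longleftrightarrow> u = u0"
    if uU: "u \<in> ?U" for u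
  proof
    assume H: "restr w (?Q - I) = restr u (?Q - I) \<and>
        (\<exists>c. restr w I = (\<lambda>t. ((restr u ?A)(i := s)) t + c * h t))"
    then obtain c where c: "restr w I = (\<lambda>t. ((restr u ?A)(i := s)) t + c * h t)" by blast
    have cond: "restr w (?Q - I) = restr u (?Q - I)" using H by blast
    have uout: "u t = 0" if "t \<notin> ?Q - {i}" for t using uU that unfolding Ueq by (auto simp: configs_def)
    have "restr w I i = w i" using iI by (simp add: restr_def)
    moreover have "restr w I i = s + c * h i" by (subst c) simp
    ultimately have "c * h i = w i - s" by (simp add: algebra_simps)
    hence cc: "c = c0" using hi by (simp add: c0_def field_simps)
    show "u = u0"
    proof
      fix t
      show "u t = u0 t"
      proof (cases "t = i")
        case True thus ?thesis using uout[of t] by (simp add: u0_def)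
      next
        case ti: False
        show ?thesis
        proof (cases "t \<in> I")
          case True
          have "restr w I t = w t" using True by (simp add: restr_def)
          moreover have "restr w I t = u t + c * h t" using True ti by (subst c) (simp add: restr_def)
          ultimately show ?thesis using ti cc by (simp add: u0_def w0_def algebra_simps)
        next
          case tI: False
          show ?thesis
          proof (cases "t \<in> ?Q")
            case True
            have "restr w (?Q - I) t = restr u (?Q - I) t" using cond by simp
            hence "w t = u t" using True tI by (simp add: restr_def)
            thus ?thesis using ti hout[OF tI] by (simp add: u0_def w0_def)
          next
            case False
            thus ?thesis using uout[of t] wout[OF False] hout[OF tI] ti by (simp add: u0_def w0_def)
          qed
        qed
      qed
    qed
  next
    assume uu: "u = u0"
    have "restr w (?Q - I) = restr u0 (?Q - I)"
      using iI hout by (auto simp: restr_def u0_def w0_def)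
    moreover have "restr w I = (\<lambda>t. ((restr u0 ?A)(i := s)) t + c0 * h t)"
    proof
      fix t
      show "restr w I t = ((restr u0 ?A)(i := s)) t + c0 * h t"
        using iI hout[of t] hi
        by (cases "t = i") (auto simp: restr_def u0_def w0_def c0_def field_simps)
    qed
    ultimately show "restr w (?Q - I) = restr u (?Q - I) \<and>
        (\<exists>c. restr w I = (\<lambda>t. ((restr u ?A)(i := s)) t + c * h t))" using uu by blast
  qed
  have Lw0: "Lf h ((restr u0 ?A)(i := s)) = Lf h w0"
    by (rule Lf_cong[OF hI]) (auto simp: restr_def u0_def w0i)
  have summand: "(if restr w (?Q - I) = restr u (?Q - I)
       then Kr h i sj j (restr w I) (restr u ?A) * \<phi> (u(i := x)) else 0) =
      (if u = u0 then (if x = s then \<phi> w * ?a0 else 0) else 0)" if uU: "u \<in> ?U" for u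
  proof (cases "u = u0")
    case True
    have kv: "Kr h i sj j (restr w I) (restr u ?A) = (if Lf h w0 = 0 then ?a0 else 0)"
      using key[OF uU] True Lw0 by (auto simp: Kr_def s_def)
    have cond: "restr w (?Q - I) = restr u (?Q - I)" using key[OF uU] True by blast
    have pw: "\<phi> w0 = \<phi> w" unfolding w0_def by (rule P2[rule_format])
    show ?thesis
    proof (cases "x = s")
      case True
      have "u0(i := x) = w0" using True w0i by (auto simp: u0_def)
      have "\<phi> w = 0" if "Lf h w0 \<noteq> 0" using P1 pw that by metis
      then show ?thesis using \<open>u = u0\<close> \<open>u0(i := x) = w0\<close> cond kv pw True by auto
    next
      case False
      have "\<phi> (u0(i := x)) = 0" if L0: "Lf h w0 = 0"
      proof (rule ccontr)
        assume "\<phi> (u0(i := x)) \<noteq> 0"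
        hence "Lf h (u0(i := x)) = 0" using P1 by blast
        moreover have "u0(i := x) = w0(i := x)" by (simp add: u0_def)
        ultimately have "Lf h w0 + h i * (x - w0 i) = 0" using Lf_upd[OF iQ] by metis
        hence "h i * (x - s) = 0" using L0 w0i by simp
        thus False using hi False by simp
      qed
      then show ?thesis using \<open>u = u0\<close> cond kv False by auto
    qed
  next
    case False
    have "\<not> (restr w (?Q - I) = restr u (?Q - I) \<and>
        (\<exists>c. restr w I = (\<lambda>t. ((restr u ?A)(i := s)) t + c * h t)))"
      using key[OF uU] False by blast
    then show ?thesis using False by (auto simp: Kr_def s_def)
  qed
  have "(\<Sum>u\<in>?U. (if restr w (?Q - I) = restr u (?Q - I)
       then Kr h i sj j (restr w I) (restr u ?A) * \<phi> (u(i := x)) else 0)) =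
     (\<Sum>u\<in>?U. (if u = u0 then (if x = s then \<phi> w * ?a0 else 0) else 0))"
    by (rule sum.cong[OF refl]) (rule summand)
  also have "\<dots> = (if x = s then \<phi> w * ?a0 else 0)"
    using u0U by simp
  finally show ?thesis by (simp add: s_def)
qed

lemma ifprod_lemma:
  fixes K K' :: complex
  shows "(if P \<and> P' then K * (\<Sum>x\<in>X. f x * cnj (g x)) * cnj K' else 0) =
    (\<Sum>x\<in>X. (if P then K * f x else 0) * cnj (if P' then K' * g x else 0))"
  by (cases P; cases P') (auto simp: sum_distrib_left sum_distrib_right mult_ac)

lemma rec_pure:
  fixes \<phi> :: "('a::{finite,field} \<Rightarrow> 'a) \<Rightarrow> complex" and h :: "'a \<Rightarrow> 'a"
  assumes iQ: "i \<in> qudits" and iI: "i \<in> I" and IQ: "I \<subseteq> qudits"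
    and hI: "\<forall>t. t \<notin> I \<longrightarrow> h t = 0" and hi: "h i \<noteq> 0"
    and P1: "\<forall>w. \<phi> w \<noteq> 0 \<longrightarrow> Lf h w = 0" and P2: "\<forall>w c. \<phi> (\<lambda>t. w t + c * h t) = \<phi> w"
    and v: "v \<in> configs qudits" and v': "v' \<in> configs qudits"
  shows "apply_ext qudits (I - {i}) I (Kr h i sj) (card (UNIV :: 'a set))
     (\<lambda>u u'. \<Sum>x\<in>UNIV. \<phi> (u(i := x)) * cnj (\<phi> (u'(i := x)))) v v' = \<phi> v * cnj (\<phi> v')"
proof -
  let ?Q = "qudits :: 'a set"
  let ?A = "I - {i}"
  let ?U = "configs ((I - {i}) \<union> (?Q - I)) :: ('a \<Rightarrow> 'a) set"
  let ?q = "card (UNIV :: 'a set)"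
  let ?a0 = "complex_of_real (1 / sqrt (real ?q))"
  define a where "a j x w = (\<Sum>u\<in>?U.
      (if restr w (?Q - I) = restr u (?Q - I)
       then Kr h i sj j (restr w I) (restr u ?A) * \<phi> (u(i := x)) else 0))" for j x w
  have step1: "apply_ext ?Q ?A I (Kr h i sj) ?q
     (\<lambda>u u'. \<Sum>x\<in>UNIV. \<phi> (u(i := x)) * cnj (\<phi> (u'(i := x)))) v v' =
     (\<Sum>j<?q. \<Sum>x\<in>UNIV. a j x v * cnj (a j x v'))"
    unfolding apply_ext_def
  proof (rule sum.cong[OF refl])
    fix j
    have "(\<Sum>x\<in>UNIV. a j x v * cnj (a j x v')) =
      (\<Sum>x\<in>UNIV. \<Sum>u\<in>?U. \<Sum>u'\<in>?U.
         (if restr v (?Q - I) = restr u (?Q - I) then Kr h i sj j (restr v I) (restr u ?A) * \<phi> (u(i := x)) else 0) *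
         cnj (if restr v' (?Q - I) = restr u' (?Q - I) then Kr h i sj j (restr v' I) (restr u' ?A) * \<phi> (u'(i := x)) else 0))"
      unfolding a_def cnj_sum sum_product by simp
    also have "\<dots> = (\<Sum>u\<in>?U. \<Sum>x\<in>UNIV. \<Sum>u'\<in>?U.
         (if restr v (?Q - I) = restr u (?Q - I) then Kr h i sj j (restr v I) (restr u ?A) * \<phi> (u(i := x)) else 0) *
         cnj (if restr v' (?Q - I) = restr u' (?Q - I) then Kr h i sj j (restr v' I) (restr u' ?A) * \<phi> (u'(i := x)) else 0))"
      by (rule sum.swap)
    also have "\<dots> = (\<Sum>u\<in>?U. \<Sum>u'\<in>?U. \<Sum>x\<in>UNIV.
         (if restr v (?Q - I) = restr u (?Q - I) then Kr h i sj j (restr v I) (restr u ?A) * \<phi> (u(i := x)) else 0) *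
         cnj (if restr v' (?Q - I) = restr u' (?Q - I) then Kr h i sj j (restr v' I) (restr u' ?A) * \<phi> (u'(i := x)) else 0))"
      by (rule sum.cong[OF refl], rule sum.swap)
    also have "\<dots> = (\<Sum>u\<in>?U. \<Sum>u'\<in>?U.
         (if restr v (?Q - I) = restr u (?Q - I) \<and> restr v' (?Q - I) = restr u' (?Q - I)
          then Kr h i sj j (restr v I) (restr u ?A) *
               (\<Sum>x\<in>UNIV. \<phi> (u(i := x)) * cnj (\<phi> (u'(i := x)))) *
               cnj (Kr h i sj j (restr v' I) (restr u' ?A)) else 0))"
      by (simp only: ifprod_lemma)
    finally show "(\<Sum>u\<in>?U. \<Sum>u'\<in>?U.
         (if restr v (?Q - I) = restr u (?Q - I) \<and> restr v' (?Q - I) = restr u' (?Q - I)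
          then Kr h i sj j (restr v I) (restr u ?A) *
               (\<Sum>x\<in>UNIV. \<phi> (u(i := x)) * cnj (\<phi> (u'(i := x)))) *
               cnj (Kr h i sj j (restr v' I) (restr u' ?A)) else 0)) =
       (\<Sum>x\<in>UNIV. a j x v * cnj (a j x v'))" by simp
  qed
  have av: "a j x w = (if x = sj j then \<phi> w * ?a0 else 0)" if "w \<in> configs ?Q" for j x w
    unfolding a_def by (rule rec_a[OF iQ iI IQ hI hi P1 P2 that])
  have q0: "real ?q > 0" using card_ge2[where 'a='a] by simp
  have sq: "complex_of_real (sqrt (real ?q)) * complex_of_real (sqrt (real ?q)) = of_nat ?q"
    by (simp flip: of_real_mult)
  have "(\<Sum>j<?q. \<Sum>x\<in>UNIV. a j x v * cnj (a j x v')) =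
      (\<Sum>j<?q. \<phi> v * ?a0 * cnj (\<phi> v' * ?a0))"
    by (rule sum.cong[OF refl]) (simp add: av[OF v] av[OF v'] if_distrib[of "\<lambda>z. z * _"] cong: if_cong)
  also have "\<dots> = \<phi> v * cnj (\<phi> v')"
    using q0 sq by (simp add: field_simps)
  finally show ?thesis using step1 by simp
qed

lemma ptrace_mix:
  fixes \<psi> :: "'a::{finite,field} qop"
  assumes iQ: "i \<in> qudits"
    and psi: "\<forall>u\<in>configs qudits. \<forall>v\<in>configs qudits.
         \<psi> u v = (\<Sum>k<n. complex_of_real (p k) * \<phi> k u * cnj (\<phi> k v))"
    and u: "u \<in> configs (qudits - {i})" and u': "u' \<in> configs (qudits - {i})"
  shows "ptrace qudits (qudits - {i}) \<psi> u u' =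
    (\<Sum>k<n. complex_of_real (p k) * (\<Sum>x\<in>UNIV. \<phi> k (u(i := x)) * cnj (\<phi> k (u'(i := x)))))"
proof -
  let ?Q = "qudits :: 'a set"
  define e where "e x = (\<lambda>_. 0 :: 'a)(i := x)" for x
  have QQ: "?Q - (?Q - {i}) = {i}" using iQ by auto
  have ce: "configs {i} = range e"
  proof
    show "configs {i} \<subseteq> range e"
    proof
      fix w :: "'a \<Rightarrow> 'a" assume "w \<in> configs {i}"
      hence "w = e (w i)" by (auto simp: configs_def e_def)
      thus "w \<in> range e" by blast
    qed
    show "range e \<subseteq> configs {i}" by (auto simp: configs_def e_def)
  qed
  have inj: "inj e"
  proof (rule injI)
    fix x y assume "e x = e y" hence "e x i = e y i" by simp
    thus "x = y" by (simp add: e_def)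
  qed
  have fu: "(\<lambda>t. if t \<in> ?Q - {i} then f t else e x t) = f(i := x)"
    if "f \<in> configs (?Q - {i})" for f x
    using that by (auto simp: configs_def e_def)
  have inQ: "f(i := x) \<in> configs ?Q" if "f \<in> configs (?Q - {i})" for f x
    using that iQ by (auto simp: configs_def)
  have "ptrace ?Q (?Q - {i}) \<psi> u u' =
     (\<Sum>w\<in>range e. \<psi> (\<lambda>t. if t \<in> ?Q - {i} then u t else w t) (\<lambda>t. if t \<in> ?Q - {i} then u' t else w t))"
    unfolding ptrace_def QQ ce ..
  also have "\<dots> = (\<Sum>x\<in>UNIV. \<psi> (u(i := x)) (u'(i := x)))"
    by (simp only: sum.reindex[OF inj] comp_def fu[OF u] fu[OF u'])
  also have "\<dots> = (\<Sum>x\<in>UNIV. \<Sum>k<n. complex_of_real (p k) * \<phi> k (u(i := x)) * cnj (\<phi> k (u'(i := x))))"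
    using psi inQ[OF u] inQ[OF u'] by simp
  also have "\<dots> = (\<Sum>k<n. \<Sum>x\<in>UNIV. complex_of_real (p k) * \<phi> k (u(i := x)) * cnj (\<phi> k (u'(i := x))))"
    by (rule sum.swap)
  also have "\<dots> = (\<Sum>k<n. complex_of_real (p k) * (\<Sum>x\<in>UNIV. \<phi> k (u(i := x)) * cnj (\<phi> k (u'(i := x)))))"
    by (simp add: sum_distrib_left mult_ac)
  finally show ?thesis .
qed

lemma apply_ext_cong:
  fixes Q :: "'a::zero set"
  assumes "\<forall>u\<in>configs (A \<union> (Q - B)). \<forall>u'\<in>configs (A \<union> (Q - B)). \<rho> u u' = \<rho>' u u'"
  shows "apply_ext Q A B K m \<rho> v v' = apply_ext Q A B K m \<rho>' v v'"
  unfolding apply_ext_def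
  by (intro sum.cong refl) (use assms in auto)

lemma apply_ext_lin:
  fixes Q :: "'a::zero set"
  shows "apply_ext Q A B K m (\<lambda>u u'. \<Sum>k<n. c k * \<rho> k u u') v v' =
   (\<Sum>k<n. c k * apply_ext Q A B K m (\<rho> k) v v')"
proof -
  let ?U = "configs (A \<union> (Q - B))"
  let ?P = "\<lambda>u u'. restr v (Q - B) = restr u (Q - B) \<and> restr v' (Q - B) = restr u' (Q - B)"
  let ?T = "\<lambda>j u u' k. c k * (if ?P u u' then K j (restr v B) (restr u A) * \<rho> k u u' * cnj (K j (restr v' B) (restr u' A)) else 0)"
  have "apply_ext Q A B K m (\<lambda>u u'. \<Sum>k<n. c k * \<rho> k u u') v v' =
      (\<Sum>j<m. \<Sum>u\<in>?U. \<Sum>u'\<in>?U. \<Sum>k<n. ?T j u u' k)"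
    unfolding apply_ext_def
    by (intro sum.cong refl) (auto simp: sum_distrib_left sum_distrib_right mult_ac)
  also have "\<dots> = (\<Sum>j<m. \<Sum>u\<in>?U. \<Sum>k<n. \<Sum>u'\<in>?U. ?T j u u' k)"
    by (intro sum.cong refl sum.swap)
  also have "\<dots> = (\<Sum>j<m. \<Sum>k<n. \<Sum>u\<in>?U. \<Sum>u'\<in>?U. ?T j u u' k)"
    by (intro sum.cong refl sum.swap)
  also have "\<dots> = (\<Sum>k<n. \<Sum>j<m. \<Sum>u\<in>?U. \<Sum>u'\<in>?U. ?T j u u' k)"
    by (rule sum.swap)
  also have "\<dots> = (\<Sum>k<n. c k * apply_ext Q A B K m (\<rho> k) v v')"
    unfolding apply_ext_def by (simp add: sum_distrib_left)
  finally show ?thesis .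
qed

lemma dual_lin:
  assumes "y \<in> dual_code C" "z \<in> dual_code C"
  shows "(\<lambda>t. y t + a * z t) \<in> dual_code C"
proof -
  have "(\<Sum>t\<in>qudits. x t * (y t + a * z t)) = 0" if "x \<in> C" for x
  proof -
    have "(\<Sum>t\<in>qudits. x t * (y t + a * z t)) = (\<Sum>t\<in>qudits. x t * y t) + a * (\<Sum>t\<in>qudits. x t * z t)"
      by (simp add: distrib_left sum.distrib sum_distrib_left mult_ac)
    thus ?thesis using that assms unfolding dual_code_def by simp
  qed
  then show ?thesis using assms unfolding dual_code_def configs_def by auto
qed

lemma CSS_props:
  fixes C :: "('a::{finite,field} \<Rightarrow> 'a) set"
  assumes hC: "h \<in> C" and hD: "h \<in> dual_code C" and \<phi>: "\<phi> \<in> CSS_space C C"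
  shows "\<forall>w. \<phi> w \<noteq> 0 \<longrightarrow> Lf h w = 0" and "\<forall>w c. \<phi> (\<lambda>t. w t + c * h t) = \<phi> w"
proof -
  obtain cf where cf: "\<phi> = (\<lambda>w. \<Sum>x\<in>C. cf x *
              (if \<exists>y\<in>dual_code C. w = (\<lambda>t. x t + y t) then 1 else 0))"
    using \<phi> unfolding CSS_space_def by blast
  show "\<forall>w. \<phi> w \<noteq> 0 \<longrightarrow> Lf h w = 0"
  proof (intro allI impI)
    fix w assume "\<phi> w \<noteq> 0"
    then obtain x y where x: "x \<in> C" and y: "y \<in> dual_code C" and w: "w = (\<lambda>t. x t + y t)"
      unfolding cf by (smt (verit, del_insts) mult_zero_right sum.neutral)
    have "Lf h w = (\<Sum>t\<in>qudits. x t * h t) + (\<Sum>t\<in>qudits. h t * y t)"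
      unfolding Lf_def w by (simp add: distrib_left sum.distrib mult_ac)
    also have "\<dots> = 0" using x y hC hD unfolding dual_code_def by auto
    finally show "Lf h w = 0" .
  qed
  show "\<forall>w c. \<phi> (\<lambda>t. w t + c * h t) = \<phi> w"
  proof (intro allI)
    fix w c
    have "(\<exists>y\<in>dual_code C. (\<lambda>t. w t + c * h t) = (\<lambda>t. x t + y t)) =
          (\<exists>y\<in>dual_code C. w = (\<lambda>t. x t + y t))" for x
    proof
      assume "\<exists>y\<in>dual_code C. (\<lambda>t. w t + c * h t) = (\<lambda>t. x t + y t)"
      then obtain y where y: "y \<in> dual_code C" "(\<lambda>t. w t + c * h t) = (\<lambda>t. x t + y t)" by blast
      have "(\<lambda>t. y t + (- c) * h t) \<in> dual_code C" by (rule dual_lin[OF y(1) hD])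
      moreover have "w = (\<lambda>t. x t + (y t + (- c) * h t))"
      proof
        fix t have "w t + c * h t = x t + y t" using y(2) by metis
        thus "w t = x t + (y t + (- c) * h t)" by (simp add: algebra_simps)
      qed
      ultimately show "\<exists>y\<in>dual_code C. w = (\<lambda>t. x t + y t)"
        by (rule rev_bexI[where x="\<lambda>t. y t + (- c) * h t"])
    next
      assume "\<exists>y\<in>dual_code C. w = (\<lambda>t. x t + y t)"
      then obtain y where y: "y \<in> dual_code C" "w = (\<lambda>t. x t + y t)" by blast
      have "(\<lambda>t. y t + c * h t) \<in> dual_code C" by (rule dual_lin[OF y(1) hD])
      moreover have "(\<lambda>t. w t + c * h t) = (\<lambda>t. x t + (y t + c * h t))"
        using y(2) by (simp add: algebra_simps)
      ultimately show "\<exists>y\<in>dual_code C. (\<lambda>t. w t + c * h t) = (\<lambda>t. x t + y t)"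
        by (rule rev_bexI[where x="\<lambda>t. y t + c * h t"])
    qed
    then show "\<phi> (\<lambda>t. w t + c * h t) = \<phi> w" unfolding cf by simp
  qed
qed

theorem corollary5p8:
  fixes r l :: nat
  assumes "r dvd (card (UNIV :: ('a::{finite,field}) set) - 1)"
    and "r \<ge> 3"
    and "card (UNIV :: 'a set) \<le> 2 * l"
    and "l \<le> card (UNIV :: 'a set) - 1"
  shows "locally_recoverable (qudits :: 'a set)
           (CSS_space (TB_code r l :: ('a \<Rightarrow> 'a) set) (TB_code r l)) r"
  unfolding locally_recoverable_def
proof (intro ballI)
  let ?Q = "qudits :: 'a set"
  let ?C = "TB_code r l :: ('a \<Rightarrow> 'a) set"
  let ?q = "card (UNIV :: 'a set)"
  fix i :: 'a assume iQ: "i \<in> ?Q"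
  hence i0: "i \<noteq> 0" by (simp add: qudits_def)
  obtain h where hC: "h \<in> ?C" and hD: "h \<in> dual_code ?C" and hi: "h i \<noteq> 0"
    and hsupp: "\<forall>t. h t \<noteq> 0 \<longrightarrow> t \<noteq> 0 \<and> t ^ r = i ^ r"
    using TB_check[OF assms(1) assms(2) i0, of l] by blast
  define I where "I = {t::'a. t \<noteq> 0 \<and> t ^ r = i ^ r}"
  have iI: "i \<in> I" using i0 by (simp add: I_def)
  have IQ: "I \<subseteq> ?Q" by (auto simp: I_def qudits_def)
  have cI: "card I \<le> r"
  proof -
    have "card I \<le> card {t::'a. t ^ r = i ^ r}" by (rule card_mono) (auto simp: I_def)
    also have "\<dots> \<le> r" using card_pow_eq[of r "i ^ r"] assms(2) by simp
    finally show ?thesis .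
  qed
  have hI: "\<forall>t. t \<notin> I \<longrightarrow> h t = 0" using hsupp by (auto simp: I_def)
  obtain sj where sj0: "bij_betw sj {0..<?q} (UNIV :: 'a set)"
    using ex_bij_betw_nat_finite[of "UNIV :: 'a set"] by auto
  have sj: "bij_betw sj {..<?q} (UNIV :: 'a set)" using sj0 by (simp add: atLeast0LessThan)
  have kr: "kraus_channel (I - {i}) I (Kr h i sj) ?q"
    by (rule kraus_ok[OF iQ iI hI hi sj])
  have rec: "\<forall>\<psi>. code_state ?Q (CSS_space ?C ?C) \<psi> \<longrightarrow>
             (\<forall>v\<in>configs ?Q. \<forall>v'\<in>configs ?Q.
                apply_ext ?Q (I - {i}) I (Kr h i sj) ?q (ptrace ?Q (?Q - {i}) \<psi>) v v' = \<psi> v v')"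
  proof (intro allI impI ballI)
    fix \<psi> :: "'a qop" and v v' :: "'a \<Rightarrow> 'a"
    assume cs: "code_state ?Q (CSS_space ?C ?C) \<psi>" and v: "v \<in> configs ?Q" and v': "v' \<in> configs ?Q"
    from cs obtain n :: nat and p :: "nat \<Rightarrow> real" and \<phi> where
      ph: "\<forall>k<n. p k \<ge> 0 \<and> \<phi> k \<in> CSS_space ?C ?C \<and> (\<Sum>w\<in>configs ?Q. (cmod (\<phi> k w))\<^sup>2) = 1"
      and "(\<Sum>k<n. p k) = 1"
      and psi: "\<forall>u\<in>configs ?Q. \<forall>v\<in>configs ?Q.
         \<psi> u v = (\<Sum>k<n. complex_of_real (p k) * \<phi> k u * cnj (\<phi> k v))"
      unfolding code_state_def by blast
    have Ueq: "(I - {i}) \<union> (?Q - I) = ?Q - {i}" using iI IQ by auto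
    have "apply_ext ?Q (I - {i}) I (Kr h i sj) ?q (ptrace ?Q (?Q - {i}) \<psi>) v v' =
      apply_ext ?Q (I - {i}) I (Kr h i sj) ?q
        (\<lambda>u u'. \<Sum>k<n. complex_of_real (p k) * (\<Sum>x\<in>UNIV. \<phi> k (u(i := x)) * cnj (\<phi> k (u'(i := x))))) v v'"
      by (rule apply_ext_cong) (simp add: Ueq ptrace_mix[OF iQ psi])
    also have "\<dots> = (\<Sum>k<n. complex_of_real (p k) * apply_ext ?Q (I - {i}) I (Kr h i sj) ?q
        (\<lambda>u u'. \<Sum>x\<in>UNIV. \<phi> k (u(i := x)) * cnj (\<phi> k (u'(i := x)))) v v')"
      by (rule apply_ext_lin)
    also have "\<dots> = (\<Sum>k<n. complex_of_real (p k) * (\<phi> k v * cnj (\<phi> k v')))"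
    proof (rule sum.cong[OF refl])
      fix k assume "k \<in> {..<n}"
      hence pk: "\<phi> k \<in> CSS_space ?C ?C" using ph by auto
      show "complex_of_real (p k) * apply_ext ?Q (I - {i}) I (Kr h i sj) ?q
        (\<lambda>u u'. \<Sum>x\<in>UNIV. \<phi> k (u(i := x)) * cnj (\<phi> k (u'(i := x)))) v v' =
        complex_of_real (p k) * (\<phi> k v * cnj (\<phi> k v'))"
        using rec_pure[where sj=sj, OF iQ iI IQ hI hi CSS_props[OF hC hD pk] v v'] by (simp only:)
    qed
    also have "\<dots> = \<psi> v v'" using psi v v' by (simp add: mult_ac)
    finally show "apply_ext ?Q (I - {i}) I (Kr h i sj) ?q (ptrace ?Q (?Q - {i}) \<psi>) v v' = \<psi> v v'" .
  qed
  show "\<exists>I. i \<in> I \<and> I \<subseteq> ?Q \<and> card I \<le> r \<and>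
       (\<exists>K m. kraus_channel (I - {i}) I K m \<and>
          (\<forall>\<psi>. code_state ?Q (CSS_space ?C ?C) \<psi> \<longrightarrow>
             (\<forall>v\<in>configs ?Q. \<forall>v'\<in>configs ?Q.
                apply_ext ?Q (I - {i}) I K m (ptrace ?Q (?Q - {i}) \<psi>) v v' = \<psi> v v')))"
    using iI IQ cI kr rec by blast
qed

end
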